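(* Let $\Bbbk$ be a unital ring and $n,r$ positive integers. Then $\Phi_{n,r}:\Bbbk W_n\to\operatorname{End}_\Bbbk(\mathbf V^{\otimes r})$ is faithful when $n-1\le r$, and $\Phi_{n,r+1/2}:\Bbbk W_{n-1}\to\operatorname{End}_\Bbbk(\mathbf V^{\otimes r}\otimes\mathbf v_n)$ is faithful when $n-2\le r$.
   Context: $\mathbf V$ is a free $\Bbbk$-module with basis $\mathbf v_1,\dots,\mathbf v_n$. $W_n$ is the symmetric group on $\{1,\dots,n\}$ acting on $\mathbf V^{\otimes r}$ by $w(\mathbf v_{j_1}\otimes\cdots\otimes\mathbf v_{j_r})=\mathbf v_{w(j_1)}\otimes\cdots\otimes\mathbf v_{w(j_r)}$ extended linearly; $\Phi_{n,r}$ is the resulting representation. $W_{n-1}=\{w\in W_n:w(n)=n\}$ preserves $\mathbf V^{\otimes r}\otimes\mathbf v_n\subset\mathbf V^{\otimes(r+1)}$, and $\Phi_{n,r+1/2}$ is the resulting representation. *)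

theory Defs
  imports "HOL-Combinatorics.Permutations"
begin

text \<open>The basis of V^{\<otimes>r} is indexed by words of length r over {1..n}:
  the word [j1,...,jr] stands for v_j1 \<otimes> ... \<otimes> v_jr.
  A vector is a coefficient function on words (zero outside the basis index set).\<close>

definition W :: "nat \<Rightarrow> (nat \<Rightarrow> nat) set" where
  "W n = {w. w permutes {1..n}}"

text \<open>W_{n-1}: permutations in W_n fixing n.\<close>
definition W_fix :: "nat \<Rightarrow> (nat \<Rightarrow> nat) set" where
  "W_fix n = {w. w permutes {1..n} \<and> w n = n}"

definition words :: "nat \<Rightarrow> nat \<Rightarrow> nat list set" where
  "words n r = {J. length J = r \<and> set J \<subseteq> {1..n}}"

text \<open>Basis of V^{\<otimes>r} \<otimes> v_n \<subseteq> V^{\<otimes>(r+1)}.\<close>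
definition half_words :: "nat \<Rightarrow> nat \<Rightarrow> nat list set" where
  "half_words n r = {J @ [n] | J. J \<in> words n r}"

text \<open>Linear extension of w(v_J) = v_{w(J)} to x = \<Sum>_{J\<in>B} x_J v_J.\<close>
definition basis_act :: "(nat \<Rightarrow> nat) \<Rightarrow> nat list set \<Rightarrow> (nat list \<Rightarrow> 'k::ring_1) \<Rightarrow> nat list \<Rightarrow> 'k" where
  "basis_act w B x = (\<lambda>K. \<Sum>J\<in>{J\<in>B. map w J = K}. x J)"

definition Phi :: "(nat \<Rightarrow> nat) set \<Rightarrow> nat list set \<Rightarrow> ((nat \<Rightarrow> nat) \<Rightarrow> 'k::ring_1) \<Rightarrow> (nat list \<Rightarrow> 'k) \<Rightarrow> nat list \<Rightarrow> 'k" where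
  "Phi G B a x = (\<lambda>K. \<Sum>w\<in>G. a w * basis_act w B x K)"

definition faithful :: "'k::ring_1 itself \<Rightarrow> (nat \<Rightarrow> nat) set \<Rightarrow> nat list set \<Rightarrow> bool" where
  "faithful _ G B \<longleftrightarrow>
     (\<forall>a :: (nat \<Rightarrow> nat) \<Rightarrow> 'k. (\<forall>w. w \<notin> G \<longrightarrow> a w = 0) \<longrightarrow>
        (\<forall>x. (\<forall>J. J \<notin> B \<longrightarrow> x J = 0) \<longrightarrow> Phi G B a x = (\<lambda>_. 0)) \<longrightarrow>
        (\<forall>w. a w = 0))"

end

theory Submission
  imports Defs
begin

lemma perm_eq_but_one:
  assumes "bij w" "inj w'" "\<forall>z. z \<noteq> k \<longrightarrow> w z = w' z"
  shows "w = w'"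
proof
  fix x
  show "w x = w' x"
  proof (cases "x = k")
    case True
    obtain z where z: "w' k = w z" using assms(1) by (metis bij_pointE)
    show ?thesis
    proof (cases "z = k")
      case True then show ?thesis using z \<open>x = k\<close> by simp
    next
      case False
      then have "w' z = w' k" using z assms(3) by simp
      then have "z = k" using assms(2) by (simp add: inj_eq)
      then show ?thesis using False by simp
    qed
  qed (use assms(3) in simp)
qed

lemma basis_act_delta:
  assumes "inj w" "J0 \<in> B"
  shows "basis_act w B (\<lambda>J. if J = J0 then (1::'k::ring_1) else 0) K
         = (if map w J0 = K then 1 else 0)"
proof (cases "map w J0 = K")
  case True
  have "{J\<in>B. map w J = K} = {J0}"
    using True assms by (auto simp: inj_map_eq_map)
  then show ?thesis using True by (simp add: basis_act_def)
next
  case False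
  then show ?thesis unfolding basis_act_def by (simp, intro sum.neutral) auto
qed

lemma faithful_core:
  fixes a :: "(nat \<Rightarrow> nat) \<Rightarrow> 'k::ring_1"
  assumes fin: "finite G" and inj: "\<forall>w\<in>G. inj w" and J0: "J0 \<in> B"
    and sep: "\<forall>w\<in>G. \<forall>w'\<in>G. map w J0 = map w' J0 \<longrightarrow> w = w'"
    and w0: "w0 \<in> G"
    and z: "Phi G B a (\<lambda>J. if J = J0 then 1 else 0) = (\<lambda>_. 0)"
  shows "a w0 = 0"
proof -
  have e0: "Phi G B a (\<lambda>J. if J = J0 then 1 else 0) (map w0 J0) = 0" using z by simp
  have e1: "Phi G B a (\<lambda>J. if J = J0 then 1 else 0) (map w0 J0) = (\<Sum>w\<in>G. a w * (if map w J0 = map w0 J0 then 1 else 0))"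
    unfolding Phi_def using inj J0 by (simp add: basis_act_delta)
  have e2: "(\<Sum>w\<in>G. a w * (if map w J0 = map w0 J0 then 1 else 0)) = (\<Sum>w\<in>G. if w = w0 then a w else 0)"
  proof (rule sum.cong[OF refl])
    fix w assume wG: "w \<in> G"
    show "a w * (if map w J0 = map w0 J0 then 1 else 0) = (if w = w0 then a w else 0)"
    proof (cases "w = w0")
      case False
      then have "map w J0 \<noteq> map w0 J0" using sep wG w0 by blast
      then show ?thesis using False by (simp only: if_False mult_zero_right if_not_P)
    qed simp
  qed
  have e3: "(\<Sum>w\<in>G. if w = w0 then a w else 0) = a w0"
    using sum.delta[OF fin, of w0 a] w0 by argo
  show ?thesis using e0 e1 e2 e3 by argo
qed

lemma faithful_from_word:
  assumes fin: "finite G" and inj: "\<forall>w\<in>G. inj w" and J0: "J0 \<in> B"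
    and sep: "\<forall>w\<in>G. \<forall>w'\<in>G. map w J0 = map w' J0 \<longrightarrow> w = w'"
  shows "faithful TYPE('k::ring_1) G B"
  unfolding faithful_def
  apply (intro allI impI)
  subgoal premises p for a w0
  proof -
    have z: "Phi G B a (\<lambda>J. if J = J0 then 1 else 0) = (\<lambda>_. 0)"
      using p(2) J0 by auto
    have c: "w0 \<in> G \<Longrightarrow> a w0 = 0" by (rule faithful_core[OF fin inj J0 sep _ z])
    show "a w0 = 0" using c p(1) by blast
  qed
  done

lemma finite_W: "finite (W n)"
  unfolding W_def by (rule finite_permutations) simp

lemma finite_W_fix: "finite (W_fix n)"
  by (rule finite_subset[OF _ finite_W]) (auto simp: W_fix_def W_def)

theorem corollary4p13:
  fixes n r :: nat
  assumes "0 < n" and "0 < r"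
  shows "(n - 1 \<le> r \<longrightarrow> faithful TYPE('k::ring_1) (W n) (words n r)) \<and>
         (n - 2 \<le> r \<longrightarrow> faithful TYPE('k::ring_1) (W_fix n) (half_words n r))"
proof (intro conjI impI)
  assume h: "n - 1 \<le> r"
  define J0 where "J0 = [1..<n] @ replicate (r - (n - 1)) (1::nat)"
  have J0w: "J0 \<in> words n r"
    using h assms by (auto simp: J0_def words_def)
  show "faithful TYPE('k::ring_1) (W n) (words n r)"
  proof (rule faithful_from_word[OF finite_W _ J0w])
    show "\<forall>w\<in>W n. inj w" by (auto simp: W_def permutes_inj)
    show "\<forall>w\<in>W n. \<forall>w'\<in>W n. map w J0 = map w' J0 \<longrightarrow> w = w'"
    proof (intro ballI impI)
      fix w w' assume w: "w \<in> W n" and w': "w' \<in> W n" and e: "map w J0 = map w' J0"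
      have pw: "w permutes {1..n}" and pw': "w' permutes {1..n}" using w w' by (auto simp: W_def)
      have "\<forall>z. z \<noteq> n \<longrightarrow> w z = w' z"
      proof (intro allI impI)
        fix z assume "z \<noteq> n"
        show "w z = w' z"
        proof (cases "z \<in> {1..n}")
          case True
          then have "z \<in> set J0" using \<open>z \<noteq> n\<close> by (auto simp: J0_def)
          then show ?thesis using e by (simp add: map_eq_conv)
        next
          case False then show ?thesis using pw pw' by (simp add: permutes_not_in)
        qed
      qed
      then show "w = w'"
        by (rule perm_eq_but_one[OF permutes_bij[OF pw] permutes_inj[OF pw']])
    qed
  qed
next
  assume h: "n - 2 \<le> r"
  define J1 where "J1 = [1..<n-1] @ replicate (r - (n - 2)) (1::nat)"
  define J0 where "J0 = J1 @ [n]"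
  have J0w: "J0 \<in> half_words n r"
    using h assms unfolding half_words_def J0_def
    by (intro CollectI exI[of _ J1]) (auto simp: J1_def words_def)
  show "faithful TYPE('k::ring_1) (W_fix n) (half_words n r)"
  proof (rule faithful_from_word[OF finite_W_fix _ J0w])
    show "\<forall>w\<in>W_fix n. inj w" by (auto simp: W_fix_def permutes_inj)
    show "\<forall>w\<in>W_fix n. \<forall>w'\<in>W_fix n. map w J0 = map w' J0 \<longrightarrow> w = w'"
    proof (intro ballI impI)
      fix w w' assume w: "w \<in> W_fix n" and w': "w' \<in> W_fix n" and e: "map w J0 = map w' J0"
      have pw: "w permutes {1..n}" and pw': "w' permutes {1..n}" using w w' by (auto simp: W_fix_def)
      have "\<forall>z. z \<noteq> n - 1 \<longrightarrow> w z = w' z"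
      proof (intro allI impI)
        fix z assume "z \<noteq> n - 1"
        show "w z = w' z"
        proof (cases "z \<in> {1..n}")
          case True
          then have "z \<in> set J0" using \<open>z \<noteq> n - 1\<close> by (auto simp: J0_def J1_def)
          then show ?thesis using e by (simp add: map_eq_conv)
        next
          case False then show ?thesis using pw pw' by (simp add: permutes_not_in)
        qed
      qed
      then show "w = w'"
        by (rule perm_eq_but_one[OF permutes_bij[OF pw] permutes_inj[OF pw']])
    qed
  qed
qed

end
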